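(* There is an absolute constant $c>0$ such that the following holds. Let $m,n\ge1$ be integers, $\gamma,\delta>0$, and let $x\in\mathbb{R}^n$ satisfy $\|x\|_\infty\le\delta$ and $\|x\|_2^2\ge\|x\|_\infty^2+\gamma^2$. Let $T=\pi m/\delta$. Then $$\int_0^T\prod_{i=1}^n F\!\left(\frac{x_i t}{2\pi m}\right)dt\le\frac{c}{\gamma},$$ where $F(y)=\left|\frac{\sin((2m+1)\pi y)}{(2m+1)\sin(\pi y)}\right|$ (with $F(y)=1$ for $y\in\mathbb{Z}$). *)

theory Defs
  imports "HOL-Analysis.Analysis"
begin

definition kerF :: "nat \<Rightarrow> real \<Rightarrow> real" where
  "kerF m y = (if y \<in> \<int> then 1
     else \<bar>sin ((2 * real m + 1) * pi * y) / ((2 * real m + 1) * sin (pi * y))\<bar>)"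

definition supnorm :: "nat \<Rightarrow> (nat \<Rightarrow> real) \<Rightarrow> real" where
  "supnorm n x = Max ((\<lambda>i. \<bar>x i\<bar>) ` {..<n})"

definition sqnorm2 :: "nat \<Rightarrow> (nat \<Rightarrow> real) \<Rightarrow> real" where
  "sqnorm2 n x = (\<Sum>i<n. (x i)\<^sup>2)"

end

theory Submission
  imports Defs "HOL-Analysis.Analysis"
begin
lemma sin_taylor5: fixes x :: real shows "\<bar>sin x - (x - x^3/6)\<bar> \<le> \<bar>x\<bar>^5/120"
proof -
  have c: "sin_coeff 0 = 0" "sin_coeff 1 = 1" "sin_coeff 2 = 0" "sin_coeff 3 = -1/6" "sin_coeff 4 = 0"
    by (simp_all add: sin_coeff_def fact_numeral)
  have s: "(\<Sum>m<5. sin_coeff m * x ^ m) = sin_coeff 0 * x^0 + sin_coeff 1 * x^1 + sin_coeff 2 * x^2 + sin_coeff 3 * x^3 + sin_coeff 4 * x^4"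
    by (simp only: lessThan_nat_numeral sum.insert finite_lessThan lessThan_iff) (simp add: numeral_eq_Suc lessThan_Suc)
  have "(\<Sum>m<5. sin_coeff m * x ^ m) = x - x^3/6"
    unfolding s c by simp
  note eq = this
  have f5: "inverse (fact 5::real) = 1/120" by (simp add: fact_numeral)
  show ?thesis using Maclaurin_sin_bound[of x 5] unfolding f5 eq by simp
qed

lemma sin_upper5: fixes x :: real assumes "0 \<le> x" shows "sin x \<le> x - x^3/6 + x^5/120"
proof -
  have "sin x - (x - x^3/6) \<le> \<bar>x\<bar>^5/120" using abs_le_D1[OF sin_taylor5[of x]] .
  then show ?thesis using assms by simp
qed

lemma sin_lower01: fixes x :: real assumes "0 \<le> x" "x \<le> 1" shows "sin x \<ge> x * (1 - 7/40 * x^2)"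
proof -
  have "x^5 \<le> x^3" using assms by (simp add: power_decreasing)
  moreover have "-(sin x - (x - x^3/6)) \<le> \<bar>x\<bar>^5/120" using abs_le_D2[OF sin_taylor5[of x]] .
  moreover have "x * (1 - 7/40 * x^2) = x - 7/40 * x^3" by (simp add: algebra_simps power2_eq_square power3_eq_cube)
  ultimately show ?thesis using assms by simp
qed

lemma sin_lower_lin: fixes x :: real assumes "0 \<le> x" "x \<le> pi/2" shows "sin x \<ge> 2/5 * x"
proof (cases "x \<le> 1")
  case True
  have "x^2 \<le> 1" using True assms by (simp add: power_le_one)
  then have "x * x^2 \<le> x" using assms by (simp add: mult_left_le)
  then have "x * (1 - 7/40 * x^2) \<ge> 2/5 * x" using True assms by (simp add: algebra_simps)
  then show ?thesis using sin_lower01[of x] True assms by linarith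
next
  case False
  have "sin 1 \<le> sin x" using False assms by (subst sin_mono_le_eq) auto
  moreover have "sin (1::real) \<ge> 33/40" using sin_lower01[of 1] by simp
  moreover have "x < 2" using assms pi_half_less_two by linarith
  ultimately show ?thesis by linarith
qed

lemma ratio_bound:
  fixes N \<theta> s :: real
  assumes N: "N \<ge> 3" and th: "0 < \<theta>" "\<theta> \<le> pi/2" and s: "0 \<le> s" "s \<le> N*\<theta>"
  shows "\<bar>sin (N*\<theta>)\<bar> / (N * sin \<theta>) \<le> exp (-(min (s^2) 1)/20)"
    and "s > 0 \<Longrightarrow> \<bar>sin (N*\<theta>)\<bar> / (N * sin \<theta>) \<le> 3/s"
proof -
  define u where "u = N*\<theta>"
  have u0: "u > 0" using N th by (simp add: u_def)
  have sinpos: "sin \<theta> > 0" using th pi_half_less_two by (intro sin_gt_zero) auto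
  define D where "D = N * sin \<theta>"
  have D0: "D > 0" using sinpos N by (simp add: D_def)
  have Dlin: "D \<ge> 2/5 * u"
  proof -
    have "sin \<theta> \<ge> 2/5*\<theta>" using sin_lower_lin th by simp
    then have "N * sin \<theta> \<ge> N * (2/5*\<theta>)" using N by (intro mult_left_mono) auto
    then show ?thesis by (simp add: D_def u_def algebra_simps)
  qed
  have r1: "\<bar>sin u\<bar> / D \<le> 5/(2*u)"
  proof -
    have "\<bar>sin u\<bar> / D \<le> 1 / D" using D0 by (intro divide_right_mono) auto
    also have "\<dots> \<le> 1 / (2/5*u)" using Dlin u0 by (intro divide_left_mono) auto
    finally show ?thesis by simp
  qed
  show "\<bar>sin (N*\<theta>)\<bar> / (N * sin \<theta>) \<le> 3/s" if sp: "s > 0"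
  proof -
    have "5/(2*u) \<le> 5 / (2 * s)" using sp s N th by (intro divide_left_mono) (auto simp: u_def)
    also have "\<dots> \<le> 3/s" using sp by (simp add: divide_simps)
    finally show ?thesis using r1 by (simp add: u_def D_def)
  qed
  have mle: "min (s^2) 1 \<le> u^2"
  proof -
    have "s^2 \<le> u^2" using s by (intro power_mono) (auto simp: u_def)
    then show ?thesis by linarith
  qed
  show "\<bar>sin (N*\<theta>)\<bar> / (N * sin \<theta>) \<le> exp (-(min (s^2) 1)/20)"
  proof (cases "u \<le> 3")
    case True
    define v where "v = u^2"
    have v0: "0 \<le> v" "v \<le> 9" using True u0 by (auto simp: v_def power2_eq_square intro: mult_mono[of u 3 u 3, simplified])
    have th1: "\<theta> \<le> u/3" using N th by (simp add: u_def field_simps)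
    have thle1: "\<theta> \<le> 1" using th1 True by linarith
    have thsq: "\<theta>^2 \<le> v/9"
    proof -
      have "\<theta>^2 \<le> (u/3)^2" using th th1 by (intro power_mono) auto
      then show ?thesis by (simp add: v_def power_divide)
    qed
    have sinu0: "sin u \<ge> 0" using True u0 pi_gt3 by (intro sin_ge_zero) auto
    have su: "sin u \<le> u * (1 - v/6 + v^2/120)"
      using sin_upper5[of u] u0 by (simp add: v_def algebra_simps power2_eq_square power3_eq_cube eval_nat_numeral)
    have st: "sin \<theta> \<ge> \<theta> * (1 - 7/360 * v)"
    proof -
      have "1 - 7/40*\<theta>^2 \<ge> 1 - 7/360 * v" using thsq by linarith
      then have "\<theta> * (1 - 7/40*\<theta>^2) \<ge> \<theta> * (1 - 7/360 * v)" using th by (intro mult_left_mono) auto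
      then show ?thesis using sin_lower01[of \<theta>] th thle1 by linarith
    qed
    have Dl: "D \<ge> u * (1 - 7/360 * v)"
    proof -
      have "N * sin \<theta> \<ge> N * (\<theta> * (1 - 7/360 * v))" using st N by (intro mult_left_mono) auto
      then show ?thesis by (simp add: D_def u_def algebra_simps)
    qed
    have poly: "u * (1 - v/6 + v^2/120) \<le> (1 - v/20) * (u * (1 - 7/360 * v))"
    proof -
      have "(1 - v/20) * (u * (1 - 7/360 * v)) - u * (1 - v/6 + v^2/120) = u * (v * (700 - 53 * v) / 7200)"
        by (simp add: field_simps power2_eq_square)
      moreover have "u * (v * (700 - 53 * v) / 7200) \<ge> 0" using u0 v0 by simp
      ultimately show ?thesis by linarith
    qed
    have "(1 - v/20) * (u * (1 - 7/360 * v)) \<le> (1 - v/20) * D" using Dl v0 by (intro mult_left_mono) auto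
    then have "\<bar>sin u\<bar> \<le> (1 - v/20) * D" using su poly sinu0 by simp
    then have "\<bar>sin u\<bar> / D \<le> 1 - v/20" using D0 by (simp add: divide_simps)
    also have "\<dots> \<le> exp (-v/20)" using exp_ge_add_one_self[of "-v/20"] by simp
    also have "\<dots> \<le> exp (-(min (s^2) 1)/20)" using mle by (simp add: v_def)
    finally show ?thesis by (simp add: u_def D_def)
  next
    case False
    have "\<bar>sin u\<bar> / D \<le> 5/(2*u)" by (rule r1)
    also have "\<dots> \<le> 5/6" using False by (simp add: divide_simps)
    also have "\<dots> \<le> 1 - 1/20" by simp
    also have "\<dots> \<le> exp (-1/20)" using exp_ge_add_one_self[of "-1/20"] by simp
    also have "\<dots> \<le> exp (-(min (s^2) 1)/20)" by simp
    finally show ?thesis by (simp add: u_def D_def)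
  qed
qed

lemma kerF_bound:
  fixes m :: nat and y :: real
  assumes m: "m \<ge> 1" and y: "\<bar>y\<bar> \<le> 1/2"
  shows "0 \<le> kerF m y"
    and "kerF m y \<le> exp (-(min ((2*pi*real m*\<bar>y\<bar>)^2) 1)/20)"
    and "y \<noteq> 0 \<Longrightarrow> kerF m y \<le> 3/(2*pi*real m*\<bar>y\<bar>)"
proof -
  show "0 \<le> kerF m y" by (simp add: kerF_def)
  define s where "s = 2*pi*real m*\<bar>y\<bar>"
  define N where "N = 2 * real m + 1"
  define \<theta> where "\<theta> = pi * \<bar>y\<bar>"
  have "kerF m y \<le> exp (-(min (s^2) 1)/20) \<and> (y \<noteq> 0 \<longrightarrow> kerF m y \<le> 3/s)"
  proof (cases "y \<in> \<int>")
    case True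
    then have "y = 0" using y by (intro Ints_nonzero_abs_less1) auto
    then show ?thesis by (simp add: kerF_def s_def)
  next
    case False
    then have y0: "y \<noteq> 0" by auto
    have th: "0 < \<theta>" "\<theta> \<le> pi/2" using y0 y by (auto simp: \<theta>_def)
    have N3: "N \<ge> 3" using m by (simp add: N_def)
    have sinpos: "sin \<theta> > 0" using th pi_half_less_two by (intro sin_gt_zero) auto
    have eq: "kerF m y = \<bar>sin (N*\<theta>)\<bar> / (N * sin \<theta>)"
    proof (cases "y \<ge> 0")
      case True
      then show ?thesis using False sinpos N3
        by (simp add: kerF_def N_def \<theta>_def abs_divide abs_mult mult.assoc)
    next
      case False2: False
      have "sin ((2 * real m + 1) * pi * y) = - sin (N*\<theta>)" "sin (pi*y) = - sin \<theta>"
        using False2 by (simp_all add: N_def \<theta>_def mult.assoc flip: sin_minus)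
      then show ?thesis using False sinpos N3
        by (simp add: kerF_def abs_divide abs_mult N_def)
    qed
    have sN: "0 \<le> s" "s \<le> N*\<theta>" using m by (auto simp: s_def N_def \<theta>_def algebra_simps)
    have "s > 0" using y0 m by (simp add: s_def)
    then show ?thesis using ratio_bound[OF N3 th sN] eq y0 by simp
  qed
  then show "kerF m y \<le> exp (-(min ((2*pi*real m*\<bar>y\<bar>)^2) 1)/20)"
    and "y \<noteq> 0 \<Longrightarrow> kerF m y \<le> 3/(2*pi*real m*\<bar>y\<bar>)" by (simp_all add: s_def)
qed

lemma prod_drop:
  fixes f :: "nat \<Rightarrow> real"
  assumes "finite A'" "A \<subseteq> A'" "\<forall>i\<in>A'. 0 \<le> f i \<and> f i \<le> 1"
  shows "prod f A' \<le> prod f A"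
proof -
  have "prod f A' = prod f (A' - A) * prod f A" using assms by (simp add: prod.subset_diff)
  moreover have "prod f (A' - A) \<le> 1" using assms by (intro prod_le_1) auto
  moreover have "prod f A \<ge> 0" using assms by (intro prod_nonneg) auto
  ultimately show ?thesis using mult_right_mono[of "prod f (A'-A)" 1 "prod f A"] by simp
qed

lemma exp_neg_le_inv: fixes z :: real assumes "z > 0" shows "exp (-z) \<le> 1/z"
proof -
  have "exp z \<ge> 1 + z" by (rule exp_ge_add_one_self)
  then have "exp z \<ge> z" by linarith
  then show ?thesis using assms by (simp add: exp_minus divide_simps)
qed

lemma prod_bound:
  fixes A :: "nat set" and f a :: "nat \<Rightarrow> real" and t \<gamma> :: real
  assumes fin: "finite A" and jA: "j \<in> A" and t: "t > 0" and g: "\<gamma> > 0"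
    and f0: "\<forall>i\<in>A. 0 \<le> f i"
    and fexp: "\<forall>i\<in>A. f i \<le> exp (-(min ((a i * t)^2) 1)/20)"
    and finv: "\<forall>i\<in>A. a i * t > 0 \<longrightarrow> f i \<le> 3/(a i * t)"
    and a0: "\<forall>i\<in>A. 0 \<le> a i" and amax: "\<forall>i\<in>A. a i \<le> a j"
    and gs: "\<gamma>^2 \<le> (\<Sum>i\<in>A-{j}. (a i)^2)"
  shows "prod f A \<le> 360/(\<gamma>^2*t^2)"
proof -
  have f1: "\<forall>i\<in>A. f i \<le> 1"
  proof
    fix i assume "i \<in> A"
    then have "f i \<le> exp (-(min ((a i * t)^2) 1)/20)" using fexp by auto
    also have "\<dots> \<le> 1" by simp
    finally show "f i \<le> 1" .
  qed
  have f01: "\<forall>i\<in>A. 0 \<le> f i \<and> f i \<le> 1" using f0 f1 by auto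
  define I where "I = A - {j}"
  define B where "B = {i\<in>I. a i * t \<ge> 1}"
  define C where "C = I - B"
  have finI: "finite I" "finite B" "finite C" using fin by (auto simp: I_def B_def C_def)
  have split: "(\<Sum>i\<in>I. (a i)^2) = (\<Sum>i\<in>B. (a i)^2) + (\<Sum>i\<in>C. (a i)^2)"
    using finI by (simp add: C_def B_def sum.subset_diff[of B I])
  have g2: "\<gamma>^2 > 0" using g by simp
  show ?thesis
  proof (cases "(\<Sum>i\<in>C. (a i)^2) \<ge> \<gamma>^2/2")
    case True
    have "prod f A \<le> prod f C" using fin f01 by (intro prod_drop) (auto simp: C_def I_def)
    also have "\<dots> \<le> (\<Prod>i\<in>C. exp (-((a i * t)^2)/20))"
    proof (intro prod_mono conjI)
      fix i assume iC: "i \<in> C"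
      then have iA: "i \<in> A" and lt: "a i * t < 1" by (auto simp: C_def B_def I_def)
      have "(a i * t)^2 \<le> 1" using lt a0 iA t by (simp add: power_le_one)
      then have "min ((a i * t)^2) 1 = (a i * t)^2" by simp
      then show "f i \<le> exp (-((a i * t)^2)/20)" using fexp iA by metis
      show "0 \<le> f i" using f0 iA by auto
    qed
    also have "\<dots> = exp (\<Sum>i\<in>C. -((a i * t)^2)/20)" using finI by (simp add: exp_sum)
    also have "(\<Sum>i\<in>C. -((a i * t)^2)/20) = -(t^2/20) * (\<Sum>i\<in>C. (a i)^2)"
      by (simp add: sum_distrib_left power_mult_distrib sum_divide_distrib flip: sum_negf) (simp add: algebra_simps)
    also have "exp (-(t^2/20) * (\<Sum>i\<in>C. (a i)^2)) \<le> exp (-(t^2/20) * (\<gamma>^2/2))"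
      using mult_left_mono[OF True, of "t^2/20"] by simp
    also have "\<dots> = exp (-(\<gamma>^2*t^2/40))" by (simp add: algebra_simps)
    also have "\<dots> \<le> 1/(\<gamma>^2*t^2/40)" using g t by (intro exp_neg_le_inv) simp
    also have "\<dots> \<le> 360/(\<gamma>^2*t^2)" using g t by (simp add: divide_simps)
    finally show ?thesis .
  next
    case False
    have gsI: "\<gamma>^2 \<le> (\<Sum>i\<in>I. (a i)^2)" using gs by (simp add: I_def)
    have SB: "(\<Sum>i\<in>B. (a i)^2) \<ge> \<gamma>^2/2" using False split gsI by linarith
    have Bne: "B \<noteq> {}" using SB g2 by auto
    define M where "M = Max (a ` B)"
    have "M \<in> a ` B" using finI Bne by (simp add: M_def)
    then obtain b where bB: "b \<in> B" and ab: "a b = M" by auto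
    have bmax: "\<forall>i\<in>B. a i \<le> a b" using finI ab by (auto simp: M_def)
    have bA: "b \<in> A" and bj: "b \<noteq> j" and abt: "a b * t \<ge> 1" using bB by (auto simp: B_def I_def)
    have abpos: "a b > 0" using abt t by (smt (verit) mult_nonpos_nonneg)
    define k where "k = card B"
    have k1: "k \<ge> 1" using finI Bne by (simp add: k_def Suc_le_eq card_gt_0_iff)
    have "(\<Sum>i\<in>B. (a i)^2) \<le> (\<Sum>i\<in>B. (a b)^2)"
    proof (intro sum_mono)
      fix i assume "i \<in> B"
      then show "(a i)^2 \<le> (a b)^2" using bmax a0 by (intro power_mono) (auto simp: B_def I_def)
    qed
    then have "real k * (a b)^2 \<ge> \<gamma>^2/2" using SB by (simp add: k_def)
    then have abk: "1/(a b)^2 \<le> 2 * real k/\<gamma>^2" using abpos g2 k1 by (simp add: divide_simps)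
    have ajb: "a j \<ge> a b" using amax bA by auto
    have Aeq: "insert j (insert b (B - {b})) \<subseteq> A" using jA bA by (auto simp: B_def I_def)
    have jnot: "j \<notin> insert b (B - {b})" using bj by (auto simp: B_def I_def)
    have "prod f A \<le> prod f (insert j (insert b (B - {b})))" using fin f01 Aeq by (intro prod_drop) auto
    also have "\<dots> = f j * (f b * prod f (B - {b}))" using finI jnot bB by (simp add: insert_absorb prod.remove)
    also have "prod f (B - {b}) \<le> (\<Prod>i\<in>B-{b}. exp (-1/20))"
    proof (intro prod_mono conjI)
      fix i assume iB: "i \<in> B - {b}"
      then have iA: "i \<in> A" and ge: "a i * t \<ge> 1" by (auto simp: B_def I_def)
      have "(a i * t)^2 \<ge> 1" using ge by (simp add: one_le_power)
      then have "min ((a i * t)^2) 1 = 1" by simp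
      then show "f i \<le> exp (-1/20)" using fexp iA by metis
      show "0 \<le> f i" using f0 iA by auto
    qed
    also have "(\<Prod>i\<in>B-{b}. exp (-1/20::real)) = exp (-1/20) ^ (k - 1)" using finI bB by (simp add: k_def)
    also have "\<dots> = exp (- (real k - 1)/20)" using k1 by (simp add: exp_of_nat_mult[symmetric] of_nat_diff) (simp add: field_simps)
    finally have P: "prod f A \<le> f j * (f b * exp (- (real k - 1)/20))"
      using f0 jA bA by (simp add: mult_left_mono)
    have fj: "f j \<le> 3/(a j * t)" using finv jA abpos ajb t by auto
    have fb: "f b \<le> 3/(a b * t)" using finv bA abpos t by auto
    have "3/(a j * t) \<le> 3/(a b * t)" using ajb abpos t by (intro divide_left_mono mult_right_mono) auto
    then have fjb: "f j \<le> 3/(a b * t)" using fj by linarith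
    have E: "real k * exp (- (real k - 1)/20) \<le> 20"
    proof -
      have "exp ((real k - 1)/20) \<ge> 1 + (real k - 1)/20" by (rule exp_ge_add_one_self)
      moreover have "1 + (real k - 1)/20 \<ge> real k/20" by (simp add: field_simps)
      ultimately have ge: "exp ((real k - 1)/20) \<ge> real k / 20" by linarith
      define e where "e = exp ((real k - 1)/20)"
      have e0: "e > 0" by (simp add: e_def)
      have eq: "exp (-(real k - 1)/20) = inverse e"
        unfolding e_def by (simp add: exp_minus[symmetric]) (simp add: field_simps)
      have "real k \<le> 20 * e" using ge by (simp add: e_def)
      then have "real k * inverse e \<le> 20" using e0 by (simp add: field_simps)
      then show ?thesis unfolding eq .
    qed
    have "prod f A \<le> (3/(a b * t)) * ((3/(a b * t)) * exp (- (real k - 1)/20))"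
      using P fjb fb f0 jA bA abpos t
      by (smt (verit) exp_gt_zero mult_mono mult_nonneg_nonneg mult_right_mono)
    also have "\<dots> = 9 * (1/(a b)^2) * (exp (- (real k - 1)/20)) / t^2"
      by (simp add: power2_eq_square field_simps)
    also have "\<dots> \<le> 9 * (2 * real k/\<gamma>^2) * (exp (- (real k - 1)/20)) / t^2"
      using abk t by (intro divide_right_mono mult_right_mono mult_left_mono) auto
    also have "\<dots> = 18 * (real k * exp (- (real k - 1)/20)) / (\<gamma>^2 * t^2)" by (simp add: field_simps)
    also have "\<dots> \<le> 18 * 20 / (\<gamma>^2 * t^2)" using E g t by (intro divide_right_mono mult_left_mono) auto
    finally show ?thesis by simp
  qed
qed

lemma H_integral:
  fixes r T :: real
  assumes r: "r > 0" and T: "T \<ge> 0"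
  shows "\<exists>I. ((\<lambda>t. if t \<le> r then 1 else r^2/t^2) has_integral I) {0..T} \<and> I \<le> 2*r"
proof (cases "T \<le> r")
  case True
  have "((\<lambda>t. 1::real) has_integral T) {0..T}" using has_integral_const_real[of "1::real" 0 T] T by simp
  then have "((\<lambda>t. if t \<le> r then 1 else r^2/t^2) has_integral T) {0..T}"
    using T True by (subst has_integral_cong[where g="\<lambda>t. 1"]) auto
  then show ?thesis using True r by (intro exI[of _ T]) auto
next
  case False
  have i1: "((\<lambda>t. if t \<le> r then 1 else r^2/t^2) has_integral r) {0..r}"
  proof -
    have "((\<lambda>t. 1::real) has_integral r) {0..r}" using has_integral_const_real[of "1::real" 0 r] r by simp
    then show ?thesis using r by (subst has_integral_cong[where g="\<lambda>t. 1"]) auto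
  qed
  have i2: "((\<lambda>t. if t \<le> r then 1 else r^2/t^2) has_integral ((-(r^2/T)) - (-(r^2/r)))) {r..T}"
  proof -
    have "((\<lambda>t. r^2/t^2) has_integral ((-(r^2/T)) - (-(r^2/r)))) {r..T}"
    proof (rule fundamental_theorem_of_calculus)
      show "r \<le> T" using False by simp
      fix t assume "t \<in> {r..T}"
      then have t0: "t > 0" using r by auto
      have "((\<lambda>t. -(r^2/t)) has_real_derivative (r^2/t^2)) (at t within {r..T})"
        using t0 by (auto intro!: derivative_eq_intros simp: power2_eq_square field_simps)
      then show "((\<lambda>t. -(r^2/t)) has_vector_derivative (r^2/t^2)) (at t within {r..T})"
        by (simp add: has_real_derivative_iff_has_vector_derivative)
    qed
    then show ?thesis using r by (subst has_integral_cong[where g="\<lambda>t. r^2/t^2"]) (auto simp: power2_eq_square)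
  qed
  have "((\<lambda>t. if t \<le> r then 1 else r^2/t^2) has_integral (r + ((-(r^2/T)) - (-(r^2/r))))) {0..T}"
    using i1 i2 False r by (intro has_integral_combine) auto
  moreover have "r + ((-(r^2/T)) - (-(r^2/r))) \<le> 2*r"
    using r T False by (simp add: power2_eq_square)
  ultimately show ?thesis by blast
qed

theorem lemma5p8:
  "\<exists>c::real. c > 0 \<and>
     (\<forall>(m::nat) (n::nat) (\<gamma>::real) (\<delta>::real) (x::nat \<Rightarrow> real).
        m \<ge> 1 \<longrightarrow> n \<ge> 1 \<longrightarrow> \<gamma> > 0 \<longrightarrow> \<delta> > 0 \<longrightarrow>
        supnorm n x \<le> \<delta> \<longrightarrow>
        sqnorm2 n x \<ge> (supnorm n x)\<^sup>2 + \<gamma>\<^sup>2 \<longrightarrow>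
        integral {0 .. pi * real m / \<delta>}
          (\<lambda>t. \<Prod>i<n. kerF m (x i * t / (2 * pi * real m))) \<le> c / \<gamma>)"
proof (intro exI[of _ "38"] conjI allI impI)
  show "(0::real) < 38" by simp
  fix m n :: nat and \<gamma> \<delta> :: real and x :: "nat \<Rightarrow> real"
  assume m: "m \<ge> 1" and n: "n \<ge> 1" and g: "\<gamma> > 0" and d: "\<delta> > 0"
    and sup: "supnorm n x \<le> \<delta>" and sq: "sqnorm2 n x \<ge> (supnorm n x)\<^sup>2 + \<gamma>\<^sup>2"
  define T where "T = pi * real m / \<delta>"
  define r where "r = 19/\<gamma>"
  define G where "G = (\<lambda>t. \<Prod>i<n. kerF m (x i * t / (2 * pi * real m)))"
  define H where "H = (\<lambda>t::real. if t \<le> r then 1 else r^2/t^2)"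
  define a where "a = (\<lambda>i. \<bar>x i\<bar>)"
  have r0: "r > 0" using g by (simp add: r_def)
  have T0: "T \<ge> 0" using d by (simp add: T_def)
  have mpos: "real m > 0" using m by simp
  have ne: "a ` {..<n} \<noteq> {}" using n by (auto simp: lessThan_empty_iff)
  have "supnorm n x \<in> a ` {..<n}" unfolding supnorm_def a_def using ne by (intro Max_in) (auto simp: a_def)
  then obtain j where j: "j < n" and aj: "a j = supnorm n x" by auto
  have amax: "\<forall>i\<in>{..<n}. a i \<le> a j" unfolding aj supnorm_def by (auto simp: a_def)
  have a0: "\<forall>i\<in>{..<n}. 0 \<le> a i" by (simp add: a_def)
  have gs: "\<gamma>^2 \<le> (\<Sum>i\<in>{..<n}-{j}. (a i)^2)"
  proof -
    have "sqnorm2 n x = (\<Sum>i\<in>{..<n}. (a i)^2)" by (simp add: sqnorm2_def a_def)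
    also have "\<dots> = (a j)^2 + (\<Sum>i\<in>{..<n}-{j}. (a i)^2)" using j by (simp add: sum.remove)
    finally show ?thesis using sq aj by simp
  qed
  have ajd: "a j \<le> \<delta>" using aj sup by simp
  have pw: "\<And>t. t \<in> {0..T} \<Longrightarrow> G t \<le> H t"
  proof -
    fix t assume t: "t \<in> {0..T}"
    define f where "f = (\<lambda>i. kerF m (x i * t / (2 * pi * real m)))"
    have Gf: "G t = prod f {..<n}" by (simp add: G_def f_def)
    have absy: "\<And>i. \<bar>x i * t / (2 * pi * real m)\<bar> = a i * t / (2 * pi * real m)"
    proof -
      fix i
      have "t \<ge> 0" using t by simp
      then show "\<bar>x i * t / (2 * pi * real m)\<bar> = a i * t / (2 * pi * real m)"
        using mpos by (simp add: a_def abs_mult abs_divide)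
    qed
    have s_eq: "\<And>i. 2*pi*real m*\<bar>x i * t / (2 * pi * real m)\<bar> = a i * t"
      using mpos by (subst absy) simp
    have yb: "\<And>i. i < n \<Longrightarrow> \<bar>x i * t / (2 * pi * real m)\<bar> \<le> 1/2"
    proof -
      fix i assume i: "i < n"
      have "a i \<le> \<delta>" using amax ajd i by force
      then have "a i * t \<le> \<delta> * T" using t a0 i d by (intro mult_mono) auto
      also have "\<delta> * T = pi * real m" using d by (simp add: T_def)
      finally have "a i * t \<le> pi * real m" .
      then show "\<bar>x i * t / (2 * pi * real m)\<bar> \<le> 1/2" using mpos by (subst absy) (simp add: divide_simps)
    qed
    have f0: "\<forall>i\<in>{..<n}. 0 \<le> f i" using kerF_bound(1) m yb by (auto simp: f_def)
    have fexp: "\<forall>i\<in>{..<n}. f i \<le> exp (-(min ((a i * t)^2) 1)/20)"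
    proof
      fix i assume i: "i \<in> {..<n}"
      show "f i \<le> exp (-(min ((a i * t)^2) 1)/20)"
        using kerF_bound(2)[OF m yb, of i, unfolded s_eq] i by (simp add: f_def)
    qed
    have finv: "\<forall>i\<in>{..<n}. a i * t > 0 \<longrightarrow> f i \<le> 3/(a i * t)"
    proof (intro ballI impI)
      fix i assume i: "i \<in> {..<n}" and pos: "a i * t > 0"
      have "x i * t / (2 * pi * real m) \<noteq> 0" using pos mpos by (auto simp: a_def)
      then show "f i \<le> 3/(a i * t)" using kerF_bound(3)[OF m yb, of i, unfolded s_eq] i by (simp add: f_def)
    qed
    have f1: "\<forall>i\<in>{..<n}. f i \<le> 1"
    proof
      fix i assume "i \<in> {..<n}"
      then have "f i \<le> exp (-(min ((a i * t)^2) 1)/20)" using fexp by auto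
      also have "\<dots> \<le> 1" by simp
      finally show "f i \<le> 1" .
    qed
    have G1: "G t \<le> 1" unfolding Gf using f0 f1 by (intro prod_le_1) auto
    show "G t \<le> H t"
    proof (cases "t \<le> r")
      case True then show ?thesis using G1 by (simp add: H_def)
    next
      case False
      then have tpos: "t > 0" using r0 by simp
      have "G t \<le> 360/(\<gamma>^2*t^2)" unfolding Gf
        using j g tpos f0 fexp finv a0 amax gs by (intro prod_bound[where a=a and j=j]) auto
      also have "\<dots> \<le> r^2/t^2" using g tpos by (simp add: r_def power_divide divide_simps)
      finally show ?thesis using False by (simp add: H_def)
    qed
  qed
  obtain I where HI: "(H has_integral I) {0..T}" and Ile: "I \<le> 2*r"
    using H_integral[OF r0 T0] unfolding H_def by blast
  have "integral {0..T} G \<le> 38/\<gamma>"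
  proof (cases "G integrable_on {0..T}")
    case True
    have "integral {0..T} G \<le> integral {0..T} H"
      using True HI pw by (intro integral_le) auto
    also have "\<dots> = I" using HI by (simp add: integral_unique)
    also have "\<dots> \<le> 38/\<gamma>" using Ile by (simp add: r_def)
    finally show ?thesis .
  next
    case False
    then show ?thesis using g by (simp add: not_integrable_integral)
  qed
  then show "integral {0 .. pi * real m / \<delta>}
          (\<lambda>t. \<Prod>i<n. kerF m (x i * t / (2 * pi * real m))) \<le> 38 / \<gamma>"
    by (simp add: T_def G_def)
qed
end
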